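(* Let $C\in\mathbb R^3$ be a unit vector and $\Delta=\{(x\cdot y,\ x\cdot C,\ y\cdot C): x,y\in\mathbb S^2\}\subset\mathbb R^3$. For any two distinct points $v,w$ of $V=\{(1,1,1),(1,-1,-1),(-1,1,-1),(-1,-1,1)\}$, the closed line segment from $v$ to $w$ is contained in the boundary $\partial\Delta$. In particular $\partial\Delta$ contains the $1$-skeleton of the regular tetrahedron with vertex set $V$.
   Context: $\mathbb S^2$ is the unit sphere in $\mathbb R^3$ and $\cdot$ is the Euclidean inner product. *)

theory Defs
  imports "HOL-Analysis.Analysis"
begin

definition S2 :: "(real^3) set" where
  "S2 = sphere 0 1"

definition Delta :: "real^3 \<Rightarrow> (real^3) set" where
  "Delta C = {vector [x \<bullet> y, x \<bullet> C, y \<bullet> C] | x y. x \<in> S2 \<and> y \<in> S2}"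

definition tetV :: "(real^3) set" where
  "tetV = {vector [1, 1, 1], vector [1, -1, -1], vector [-1, 1, -1], vector [-1, -1, 1]}"

end

theory Submission
  imports Defs
begin

lemma ex_dot:
  fixes C :: "real^3"
  assumes "norm C = 1" "\<bar>t\<bar> \<le> 1"
  shows "\<exists>x\<in>S2. x \<bullet> C = t"
proof -
  have "-1 \<le> t" "t \<le> 1" using assms(2) by auto
  have "connected ((\<lambda>x. x \<bullet> C) ` sphere (0::real^3) 1)"
    by (intro connected_continuous_image connected_sphere) (auto intro: continuous_intros)
  moreover have "1 \<in> (\<lambda>x. x \<bullet> C) ` sphere (0::real^3) 1"
    using assms(1) by (auto intro!: image_eqI[of _ _ C] simp: dot_square_norm)
  moreover have "-1 \<in> (\<lambda>x. x \<bullet> C) ` sphere (0::real^3) 1"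
    using assms(1) by (auto intro!: image_eqI[of _ _ "-C"] simp: dot_square_norm)
  ultimately have "t \<in> (\<lambda>x. x \<bullet> C) ` sphere (0::real^3) 1"
    using \<open>-1 \<le> t\<close> \<open>t \<le> 1\<close> connected_iff_interval by blast
  then show ?thesis unfolding S2_def by auto
qed

lemma unit_dot: "x \<in> S2 \<Longrightarrow> y \<in> S2 \<Longrightarrow> \<bar>x \<bullet> y\<bar> \<le> 1"
  unfolding S2_def using Cauchy_Schwarz_ineq2[of x y] by auto

lemma Delta_bound:
  assumes "p \<in> Delta C" "norm C = 1"
  shows "\<bar>p $ i\<bar> \<le> 1"
proof -
  from assms obtain x y where xy: "x \<in> S2" "y \<in> S2" "p = vector [x \<bullet> y, x \<bullet> C, y \<bullet> C]"
    unfolding Delta_def by auto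
  have C: "C \<in> S2" using assms(2) unfolding S2_def by auto
  show ?thesis using exhaust_3[of i] xy unit_dot[OF xy(1) xy(2)] unit_dot[OF xy(1) C] unit_dot[OF xy(2) C]
    by auto
qed

lemma Delta_frontier:
  assumes "p \<in> Delta C" "norm C = 1" "\<bar>p $ i\<bar> = 1"
  shows "p \<in> frontier (Delta C)"
proof -
  have "p \<notin> interior (Delta C)"
  proof
    assume "p \<in> interior (Delta C)"
    then obtain e where e: "e > 0" "ball p e \<subseteq> Delta C" using mem_interior by blast
    define q where "q = p + ((e/2) * sgn (p $ i)) *\<^sub>R axis i 1"
    have "dist p q = e/2" using e assms(3)
      by (simp add: q_def dist_norm abs_mult abs_sgn_eq)
    then have "q \<in> Delta C" using e by auto
    then have "\<bar>q $ i\<bar> \<le> 1" using Delta_bound assms(2) by blast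
    moreover have "q $ i = p $ i + (e/2) * sgn (p $ i)" by (simp add: q_def axis_def)
    ultimately show False using e assms(3) by (auto simp: abs_if sgn_if split: if_splits)
  qed
  then show ?thesis using assms(1) closure_subset unfolding frontier_def by auto
qed

lemma E1: assumes "norm C = 1" "\<bar>t\<bar> \<le> 1" shows "vector [1,t,t] \<in> frontier (Delta C)"
proof -
  obtain x where x: "x \<in> S2" "x \<bullet> C = t" using ex_dot[OF assms] by blast
  have "x \<bullet> x = 1" using x unfolding S2_def by (simp add: dot_square_norm)
  then have "vector [1,t,t] \<in> Delta C" unfolding Delta_def using x by force
  then show ?thesis using Delta_frontier[OF _ assms(1), of _ 1] by simp
qed

lemma E2: assumes "norm C = 1" "\<bar>t\<bar> \<le> 1" shows "vector [t,1,t] \<in> frontier (Delta C)"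
proof -
  obtain y where y: "y \<in> S2" "y \<bullet> C = t" using ex_dot[OF assms] by blast
  have C: "C \<in> S2" "C \<bullet> C = 1" using assms(1) unfolding S2_def by (auto simp: dot_square_norm)
  have "vector [C \<bullet> y, C \<bullet> C, y \<bullet> C] \<in> Delta C" unfolding Delta_def using y C by blast
  then have "vector [t,1,t] \<in> Delta C" using y C by (simp add: inner_commute)
  then show ?thesis using Delta_frontier[OF _ assms(1), of _ 2] by simp
qed

lemma E3: assumes "norm C = 1" "\<bar>t\<bar> \<le> 1" shows "vector [t,t,1] \<in> frontier (Delta C)"
proof -
  obtain x where x: "x \<in> S2" "x \<bullet> C = t" using ex_dot[OF assms] by blast
  have C: "C \<in> S2" "C \<bullet> C = 1" using assms(1) unfolding S2_def by (auto simp: dot_square_norm)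
  have "vector [x \<bullet> C, x \<bullet> C, C \<bullet> C] \<in> Delta C" unfolding Delta_def using x C by blast
  then have "vector [t,t,1] \<in> Delta C" using x C by simp
  then show ?thesis using Delta_frontier[OF _ assms(1), of _ 3] by simp
qed

lemma E4: assumes "norm C = 1" "\<bar>t\<bar> \<le> 1" shows "vector [t,-t,-1] \<in> frontier (Delta C)"
proof -
  obtain x where x: "x \<in> S2" "x \<bullet> C = -t" using ex_dot[OF assms(1), of "-t"] assms(2) by force
  have C: "-C \<in> S2" "C \<bullet> C = 1" using assms(1) unfolding S2_def by (auto simp: dot_square_norm)
  have "vector [x \<bullet> (-C), x \<bullet> C, (-C) \<bullet> C] \<in> Delta C" unfolding Delta_def using x C by blast
  then have "vector [t,-t,-1] \<in> Delta C" using x C by simp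
  then show ?thesis using Delta_frontier[OF _ assms(1), of _ 3] by simp
qed

lemma E5: assumes "norm C = 1" "\<bar>t\<bar> \<le> 1" shows "vector [t,-1,-t] \<in> frontier (Delta C)"
proof -
  obtain y where y: "y \<in> S2" "y \<bullet> C = -t" using ex_dot[OF assms(1), of "-t"] assms(2) by force
  have C: "-C \<in> S2" "C \<bullet> C = 1" using assms(1) unfolding S2_def by (auto simp: dot_square_norm)
  have "vector [(-C) \<bullet> y, (-C) \<bullet> C, y \<bullet> C] \<in> Delta C" unfolding Delta_def using y C by blast
  then have "vector [t,-1,-t] \<in> Delta C" using y C by (simp add: inner_commute)
  then show ?thesis using Delta_frontier[OF _ assms(1), of _ 2] by simp
qed

lemma E6: assumes "norm C = 1" "\<bar>t\<bar> \<le> 1" shows "vector [-1,t,-t] \<in> frontier (Delta C)"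
proof -
  obtain x where x: "x \<in> S2" "x \<bullet> C = t" using ex_dot[OF assms] by blast
  have xx: "x \<bullet> x = 1" "-x \<in> S2" using x unfolding S2_def by (auto simp: dot_square_norm)
  have "vector [x \<bullet> (-x), x \<bullet> C, (-x) \<bullet> C] \<in> Delta C" unfolding Delta_def using x xx by blast
  then have "vector [-1,t,-t] \<in> Delta C" using x xx by simp
  then show ?thesis using Delta_frontier[OF _ assms(1), of _ 1] by simp
qed

lemma vec_comb: "(1 - u) *\<^sub>R vector [a,b,c] + u *\<^sub>R vector [d,e,f] = (vector [(1-u)*a+u*d, (1-u)*b+u*e, (1-u)*c+u*f] :: real^3)"
  by (auto simp: vec_eq_iff forall_3)

lemma Eall:
  assumes "norm C = 1"
  shows "(a = 1 \<and> b = c \<and> \<bar>b\<bar> \<le> 1) \<or> (b = 1 \<and> a = c \<and> \<bar>a\<bar> \<le> 1) \<or> (c = 1 \<and> a = b \<and> \<bar>a\<bar> \<le> 1)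
    \<or> (c = -1 \<and> b = -a \<and> \<bar>a\<bar> \<le> 1) \<or> (b = -1 \<and> c = -a \<and> \<bar>a\<bar> \<le> 1) \<or> (a = -1 \<and> c = -b \<and> \<bar>b\<bar> \<le> 1)
    \<Longrightarrow> vector [a,b,c] \<in> frontier (Delta C)"
  using E1[OF assms] E2[OF assms] E3[OF assms] E4[OF assms] E5[OF assms] E6[OF assms] by auto

theorem mainTheorem7:
  fixes C :: "real^3"
  assumes "norm C = 1"
  shows "\<forall>v\<in>tetV. \<forall>w\<in>tetV. v \<noteq> w \<longrightarrow> closed_segment v w \<subseteq> frontier (Delta C)"
proof (intro ballI impI subsetI)
  fix v w p assume v: "v \<in> tetV" and w: "w \<in> tetV" and "v \<noteq> w" and p: "p \<in> closed_segment v w"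
  then obtain u where u: "0 \<le> u" "u \<le> 1" and pu: "p = (1 - u) *\<^sub>R v + u *\<^sub>R w"
    unfolding closed_segment_def by auto
  show "p \<in> frontier (Delta C)"
    using v w \<open>v \<noteq> w\<close> u unfolding tetV_def pu
    apply (simp only: insert_iff empty_iff)
    apply (elim disjE)
    apply (simp_all add: vec_comb)
    apply (rule Eall[OF assms], auto)+
    done
qed

end
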